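(* If $(S,P)$ is a $\Gamma$-contraction, then $(S,P,0)$ is a $\Gamma_3$-contraction.
   Context: $\Gamma=\{(z_1+z_2,z_1z_2):|z_i|\le1\}\subset\mathbb C^2$ and $\Gamma_3=\{(z_1+z_2+z_3,\,z_1z_2+z_2z_3+z_3z_1,\,z_1z_2z_3):|z_i|\le1\}\subset\mathbb C^3$. A commuting tuple $T$ of bounded Hilbert space operators is a $\Gamma$-contraction (resp. $\Gamma_3$-contraction) if its Taylor joint spectrum lies in $\Gamma$ (resp. $\Gamma_3$) and $\|f(T)\|\le\sup|f|$ over that set for every rational function $f$ with poles off that set. *)

theory Defs
  imports "HOL-Analysis.Analysis"
begin

text \<open>HOL-Analysis only has real inner product spaces, so we introduce complex
Hilbert spaces: a real Banach space with a compatible complex scalar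
multiplication and a complex inner product (antilinear in the first slot)
inducing the norm.\<close>

class chilbert_space = banach +
  fixes cscale :: "complex \<Rightarrow> 'a \<Rightarrow> 'a"
    and cinner :: "'a \<Rightarrow> 'a \<Rightarrow> complex"
  assumes cscale_of_real: "cscale (complex_of_real r) x = scaleR r x"
    and cscale_add_right: "cscale a (x + y) = cscale a x + cscale a y"
    and cscale_add_left: "cscale (a + b) x = cscale a x + cscale b x"
    and cscale_cscale: "cscale a (cscale b x) = cscale (a * b) x"
    and cinner_conj: "cinner x y = cnj (cinner y x)"
    and cinner_add_left: "cinner (x + y) z = cinner x z + cinner y z"
    and cinner_cscale_left: "cinner (cscale a x) y = cnj a * cinner x y"
    and norm_eq_cinner: "complex_of_real ((norm x)\<^sup>2) = cinner x x"

definition bounded_clinear :: "('a::chilbert_space \<Rightarrow> 'a) \<Rightarrow> bool" where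
  "bounded_clinear A \<longleftrightarrow> bounded_linear A \<and> (\<forall>c x. A (cscale c x) = cscale c (A x))"

definition shift_op :: "('a::chilbert_space \<Rightarrow> 'a) \<Rightarrow> complex \<Rightarrow> 'a \<Rightarrow> 'a" where
  "shift_op A l = (\<lambda>x. A x - cscale l x)"

text \<open>Koszul complex of a commuting pair (A,B):
  0 -> H -> H^2 -> H -> 0, with d0 x = (A x, B x), d1 (x,y) = B x - A y.\<close>

definition koszul_exact2 :: "('a::chilbert_space \<Rightarrow> 'a) \<Rightarrow> ('a \<Rightarrow> 'a) \<Rightarrow> bool" where
  "koszul_exact2 A B \<longleftrightarrow>
     (\<forall>x. A x = 0 \<and> B x = 0 \<longrightarrow> x = 0) \<and>
     (\<forall>x y. B x - A y = 0 \<longrightarrow> (\<exists>u. x = A u \<and> y = B u)) \<and>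
     (\<forall>z. \<exists>x y. B x - A y = z)"

text \<open>Koszul complex of a commuting triple (A,B,C):
  0 -> H -> H^3 -> H^3 -> H -> 0, with
  d0 x = (A x, B x, C x),
  d1 (x,y,z) = (B x - A y, C x - A z, C y - B z),
  d2 (u,v,w) = C u - B v + A w.\<close>

definition koszul_exact3 ::
  "('a::chilbert_space \<Rightarrow> 'a) \<Rightarrow> ('a \<Rightarrow> 'a) \<Rightarrow> ('a \<Rightarrow> 'a) \<Rightarrow> bool" where
  "koszul_exact3 A B C \<longleftrightarrow>
     (\<forall>x. A x = 0 \<and> B x = 0 \<and> C x = 0 \<longrightarrow> x = 0) \<and>
     (\<forall>x y z. B x - A y = 0 \<and> C x - A z = 0 \<and> C y - B z = 0 \<longrightarrow>
        (\<exists>u. x = A u \<and> y = B u \<and> z = C u)) \<and>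
     (\<forall>u v w. C u - B v + A w = 0 \<longrightarrow>
        (\<exists>x y z. u = B x - A y \<and> v = C x - A z \<and> w = C y - B z)) \<and>
     (\<forall>h. \<exists>u v w. C u - B v + A w = h)"

definition taylor_spectrum2 ::
  "('a::chilbert_space \<Rightarrow> 'a) \<Rightarrow> ('a \<Rightarrow> 'a) \<Rightarrow> (complex \<times> complex) set" where
  "taylor_spectrum2 A B =
     {(l1, l2). \<not> koszul_exact2 (shift_op A l1) (shift_op B l2)}"

definition taylor_spectrum3 ::
  "('a::chilbert_space \<Rightarrow> 'a) \<Rightarrow> ('a \<Rightarrow> 'a) \<Rightarrow> ('a \<Rightarrow> 'a) \<Rightarrow> (complex \<times> complex \<times> complex) set" where
  "taylor_spectrum3 A B C =
     {(l1, l2, l3). \<not> koszul_exact3 (shift_op A l1) (shift_op B l2) (shift_op C l3)}"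

text \<open>A polynomial is given by a finitely supported coefficient function on
multi-indices.\<close>

definition poly2 :: "(nat \<times> nat \<Rightarrow> complex) \<Rightarrow> complex \<times> complex \<Rightarrow> complex" where
  "poly2 c z = (\<Sum>k\<in>{k. c k \<noteq> 0}. c k * fst z ^ fst k * snd z ^ snd k)"

definition poly3 :: "(nat \<times> nat \<times> nat \<Rightarrow> complex) \<Rightarrow> complex \<times> complex \<times> complex \<Rightarrow> complex" where
  "poly3 c z = (\<Sum>k\<in>{k. c k \<noteq> 0}.
      c k * fst z ^ fst k * fst (snd z) ^ fst (snd k) * snd (snd z) ^ snd (snd k))"

definition opoly2 ::
  "(nat \<times> nat \<Rightarrow> complex) \<Rightarrow> ('a::chilbert_space \<Rightarrow> 'a) \<Rightarrow> ('a \<Rightarrow> 'a) \<Rightarrow> 'a \<Rightarrow> 'a" where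
  "opoly2 c A B = (\<lambda>x. \<Sum>k\<in>{k. c k \<noteq> 0}. cscale (c k) ((A ^^ fst k) ((B ^^ snd k) x)))"

definition opoly3 ::
  "(nat \<times> nat \<times> nat \<Rightarrow> complex) \<Rightarrow> ('a::chilbert_space \<Rightarrow> 'a) \<Rightarrow> ('a \<Rightarrow> 'a) \<Rightarrow> ('a \<Rightarrow> 'a)
     \<Rightarrow> 'a \<Rightarrow> 'a" where
  "opoly3 c A B C = (\<lambda>x. \<Sum>k\<in>{k. c k \<noteq> 0}.
      cscale (c k) ((A ^^ fst k) ((B ^^ fst (snd k)) ((C ^^ snd (snd k)) x))))"

definition Gamma2 :: "(complex \<times> complex) set" where
  "Gamma2 = {(z1 + z2, z1 * z2) | z1 z2. cmod z1 \<le> 1 \<and> cmod z2 \<le> 1}"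

definition Gamma3 :: "(complex \<times> complex \<times> complex) set" where
  "Gamma3 = {(z1 + z2 + z3, z1 * z2 + z2 * z3 + z3 * z1, z1 * z2 * z3) | z1 z2 z3.
               cmod z1 \<le> 1 \<and> cmod z2 \<le> 1 \<and> cmod z3 \<le> 1}"

text \<open>For a rational function f = p/q with q nonvanishing on the set, f(T) is
p(T) q(T)^{-1}; we require the norm bound for the (unique) inverse of q(T).\<close>

definition gamma_contraction :: "('a::chilbert_space \<Rightarrow> 'a) \<Rightarrow> ('a \<Rightarrow> 'a) \<Rightarrow> bool" where
  "gamma_contraction S P \<longleftrightarrow>
     bounded_clinear S \<and> bounded_clinear P \<and> S \<circ> P = P \<circ> S \<and>
     taylor_spectrum2 S P \<subseteq> Gamma2 \<and>
     (\<forall>p q. finite {k. p k \<noteq> 0} \<and> finite {k. q k \<noteq> 0} \<and>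
            (\<forall>z\<in>Gamma2. poly2 q z \<noteq> 0) \<longrightarrow>
        (\<forall>R. R \<circ> opoly2 q S P = id \<and> opoly2 q S P \<circ> R = id \<longrightarrow>
           onorm (opoly2 p S P \<circ> R) \<le> (SUP z\<in>Gamma2. cmod (poly2 p z / poly2 q z))))"

definition gamma3_contraction ::
  "('a::chilbert_space \<Rightarrow> 'a) \<Rightarrow> ('a \<Rightarrow> 'a) \<Rightarrow> ('a \<Rightarrow> 'a) \<Rightarrow> bool" where
  "gamma3_contraction A B C \<longleftrightarrow>
     bounded_clinear A \<and> bounded_clinear B \<and> bounded_clinear C \<and>
     A \<circ> B = B \<circ> A \<and> A \<circ> C = C \<circ> A \<and> B \<circ> C = C \<circ> B \<and>
     taylor_spectrum3 A B C \<subseteq> Gamma3 \<and>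
     (\<forall>p q. finite {k. p k \<noteq> 0} \<and> finite {k. q k \<noteq> 0} \<and>
            (\<forall>z\<in>Gamma3. poly3 q z \<noteq> 0) \<longrightarrow>
        (\<forall>R. R \<circ> opoly3 q A B C = id \<and> opoly3 q A B C \<circ> R = id \<longrightarrow>
           onorm (opoly3 p A B C \<circ> R) \<le> (SUP z\<in>Gamma3. cmod (poly3 p z / poly3 q z))))"

end

theory Submission
  imports Defs
begin

lemma cscale_zero_right: "cscale a (0::'a::chilbert_space) = 0"
  by (metis add_cancel_right_right add_0 cscale_add_right)

lemma cscale_diff_right: "cscale a ((x::'a::chilbert_space) - y) = cscale a x - cscale a y"
  by (metis cscale_add_right diff_add_cancel eq_diff_eq)

lemma cscale_minus_right: "cscale a (- (x::'a::chilbert_space)) = - cscale a x"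
  using cscale_diff_right[of a 0 x] by (simp add: cscale_zero_right)

lemma cscale_one: "cscale 1 (x::'a::chilbert_space) = x"
  using cscale_of_real[of 1 x] by simp

lemma cscale_mone: "cscale (-1) (x::'a::chilbert_space) = - x"
  using cscale_of_real[of "-1" x] by simp

lemma exact3_inv:
  fixes A B C D :: "'a::ab_group_add \<Rightarrow> 'a"
  assumes A0: "A 0 = 0" and B0: "B 0 = 0"
    and Dd: "\<And>x y. D (x - y) = D x - D y"
    and CD: "\<And>x. C (D x) = x" and DC: "\<And>x. D (C x) = x"
    and AD: "\<And>x. A (D x) = D (A x)" and BD: "\<And>x. B (D x) = D (B x)"
  shows "(\<forall>x. A x = 0 \<and> B x = 0 \<and> C x = 0 \<longrightarrow> x = 0) \<and>
     (\<forall>x y z. B x - A y = 0 \<and> C x - A z = 0 \<and> C y - B z = 0 \<longrightarrow>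
        (\<exists>u. x = A u \<and> y = B u \<and> z = C u)) \<and>
     (\<forall>u v w. C u - B v + A w = 0 \<longrightarrow>
        (\<exists>x y z. u = B x - A y \<and> v = C x - A z \<and> w = C y - B z)) \<and>
     (\<forall>h. \<exists>u v w. C u - B v + A w = h)"
proof (intro conjI allI impI)
  have D0: "D 0 = 0" using Dd[of 0 0] by simp
  fix x assume h: "A x = 0 \<and> B x = 0 \<and> C x = 0"
  have "x = D (C x)" by (rule DC[symmetric])
  also have "\<dots> = 0" using h D0 by simp
  finally show "x = 0" .
next
  fix x y z assume h: "B x - A y = 0 \<and> C x - A z = 0 \<and> C y - B z = 0"
  have hx: "A z = C x" and hy: "B z = C y" using h by simp_all
  have "A (D z) = x" by (simp only: AD hx DC)
  moreover have "B (D z) = y" by (simp only: BD hy DC)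
  moreover have "C (D z) = z" by (rule CD)
  ultimately show "\<exists>u. x = A u \<and> y = B u \<and> z = C u" by metis
next
  fix u v w assume h: "C u - B v + A w = 0"
  have e: "B v - A w = C u" using h by (simp add: algebra_simps)
  have "B (D v) - A (D w) = D (B v) - D (A w)" by (simp only: AD BD)
  also have "\<dots> = D (B v - A w)" by (rule Dd[symmetric])
  also have "\<dots> = u" by (simp only: e DC)
  finally have "u = B (D v) - A (D w)" by simp
  moreover have "v = C (D v) - A 0" by (simp only: CD A0 diff_zero)
  moreover have "w = C (D w) - B 0" by (simp only: CD B0 diff_zero)
  ultimately show "\<exists>x y z. u = B x - A y \<and> v = C x - A z \<and> w = C y - B z" by blast
next
  fix h
  have "C (D h) - B 0 + A 0 = h" by (simp only: CD A0 B0 diff_zero add_0_right)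
  thus "\<exists>u v w. C u - B v + A w = h" by blast
qed

lemma bcl_zero: "bounded_clinear S \<Longrightarrow> S 0 = 0"
  unfolding bounded_clinear_def using linear_0 bounded_linear.linear by blast

lemma bcl_diff: "bounded_clinear S \<Longrightarrow> S (x - y) = S x - S y"
  unfolding bounded_clinear_def using linear_diff bounded_linear.linear by blast

lemma shift_diff: "bounded_clinear S \<Longrightarrow> shift_op S l (x - y) = shift_op S l x - shift_op S l y"
  by (simp add: shift_op_def bcl_diff cscale_diff_right algebra_simps)

lemma shift_zero: "bounded_clinear S \<Longrightarrow> shift_op S l 0 = 0"
  by (simp add: shift_op_def bcl_zero cscale_zero_right)

lemma shift_minus: "bounded_clinear S \<Longrightarrow> shift_op S l (- x) = - shift_op S l x"
  using shift_diff[of S l 0 x] by (simp add: shift_zero)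

lemma shift_comm: "bounded_clinear S \<Longrightarrow> shift_op S l (cscale d x) = cscale d (shift_op S l x)"
  unfolding shift_op_def bounded_clinear_def
  by (simp add: cscale_diff_right cscale_cscale mult.commute)

lemma exact2_to_3:
  fixes S P :: "'a::chilbert_space \<Rightarrow> 'a"
  assumes "bounded_clinear S" "bounded_clinear P"
    and ex: "koszul_exact2 (shift_op S l1) (shift_op P l2)"
  shows "koszul_exact3 (shift_op S l1) (shift_op P l2) (\<lambda>_. 0)"
proof -
  let ?A = "shift_op S l1" and ?B = "shift_op P l2"
  have Am: "\<And>x. ?A (-x) = - ?A x" by (rule shift_minus[OF assms(1)])
  have Bm: "\<And>x. ?B (-x) = - ?B x" by (rule shift_minus[OF assms(2)])
  note ex' = ex[unfolded koszul_exact2_def]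
  have e1: "\<And>x. ?A x = 0 \<Longrightarrow> ?B x = 0 \<Longrightarrow> x = 0" using ex' by blast
  have e2: "\<And>x y. ?B x - ?A y = 0 \<Longrightarrow> (\<exists>u. x = ?A u \<and> y = ?B u)" using ex' by blast
  have e3: "\<And>z. \<exists>x y. ?B x - ?A y = z" using ex' by blast
  have g1: "\<forall>x. ?A x = 0 \<and> ?B x = 0 \<and> (0::'a) = 0 \<longrightarrow> x = 0"
    using e1 by blast
  have g2: "\<forall>x y z. ?B x - ?A y = 0 \<and> (0::'a) - ?A z = 0 \<and> 0 - ?B z = 0 \<longrightarrow>
        (\<exists>u. x = ?A u \<and> y = ?B u \<and> z = 0)"
  proof (intro allI impI)
    fix x y z assume h: "?B x - ?A y = 0 \<and> (0::'a) - ?A z = 0 \<and> 0 - ?B z = 0"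
    have "?A z = 0" "?B z = 0" using h by simp_all
    hence z0: "z = 0" by (rule e1)
    obtain u where "x = ?A u \<and> y = ?B u" using e2 h by blast
    thus "\<exists>u. x = ?A u \<and> y = ?B u \<and> z = 0" using z0 by blast
  qed
  have g3: "\<forall>u v w. (0::'a) - ?B v + ?A w = 0 \<longrightarrow>
        (\<exists>x y z. u = ?B x - ?A y \<and> v = 0 - ?A z \<and> w = 0 - ?B z)"
  proof (intro allI impI)
    fix u v w assume h: "(0::'a) - ?B v + ?A w = 0"
    have "?B (-v) - ?A (-w) = 0 - ?B v + ?A w" by (simp only: Am Bm) simp
    hence "?B (-v) - ?A (-w) = 0" using h by simp
    then obtain t where t: "-v = ?A t \<and> -w = ?B t" using e2 by blast
    obtain x y where xy: "?B x - ?A y = u" using e3 by blast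
    have "v = 0 - ?A t" using t by (metis minus_minus diff_0)
    moreover have "w = 0 - ?B t" using t by (metis minus_minus diff_0)
    ultimately show "\<exists>x y z. u = ?B x - ?A y \<and> v = 0 - ?A z \<and> w = 0 - ?B z"
      using xy by blast
  qed
  have g4: "\<forall>h. \<exists>u v w. (0::'a) - ?B v + ?A w = h"
  proof
    fix h obtain x y where xy: "?B x - ?A y = h" using e3 by blast
    have "(0::'a) - ?B (-x) + ?A (-y) = ?B x - ?A y" by (simp only: Am Bm) simp
    hence "(0::'a) - ?B (-x) + ?A (-y) = h" using xy by simp
    thus "\<exists>u v w. (0::'a) - ?B v + ?A w = h" by blast
  qed
  show ?thesis unfolding koszul_exact3_def using g1 g2 g3 g4 by (intro conjI)
qed

definition emb :: "nat \<times> nat \<Rightarrow> nat \<times> nat \<times> nat" where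
  "emb k = (fst k, snd k, 0)"

lemma inj_emb: "inj emb" unfolding emb_def inj_def by auto

lemma sum_emb:
  fixes f :: "nat \<times> nat \<times> nat \<Rightarrow> 'b::comm_monoid_add"
  assumes fin: "finite {k. c k \<noteq> 0}" and z: "\<And>k. snd (snd k) \<noteq> 0 \<Longrightarrow> f k = 0"
  shows "(\<Sum>k\<in>{k. c k \<noteq> 0}. f k) = (\<Sum>k\<in>{k. (c \<circ> emb) k \<noteq> 0}. f (emb k))"
proof -
  have "(\<Sum>k\<in>{k. (c \<circ> emb) k \<noteq> 0}. f (emb k)) = sum f (emb ` {k. (c \<circ> emb) k \<noteq> 0})"
  proof -
    have "inj_on emb {k. (c \<circ> emb) k \<noteq> 0}" using inj_emb by (rule inj_on_subset) simp
    from sum.reindex[OF this, of f] show ?thesis by (simp add: comp_def)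
  qed
  also have "\<dots> = sum f {k. c k \<noteq> 0}"
  proof (rule sum.mono_neutral_left[OF fin])
    show "emb ` {k. (c \<circ> emb) k \<noteq> 0} \<subseteq> {k. c k \<noteq> 0}" by auto
    show "\<forall>i\<in>{k. c k \<noteq> 0} - emb ` {k. (c \<circ> emb) k \<noteq> 0}. f i = 0"
    proof
      fix i assume i: "i \<in> {k. c k \<noteq> 0} - emb ` {k. (c \<circ> emb) k \<noteq> 0}"
      have "snd (snd i) \<noteq> 0"
      proof
        assume "snd (snd i) = 0"
        hence "i = emb (fst i, fst (snd i))" unfolding emb_def by (cases i) auto
        thus False using i by (metis (mono_tags, lifting) DiffE comp_apply image_eqI mem_Collect_eq)
      qed
      thus "f i = 0" by (rule z)
    qed
  qed
  finally show ?thesis by simp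
qed

lemma fin_emb: "finite {k. c k \<noteq> 0} \<Longrightarrow> finite {k. (c \<circ> emb) k \<noteq> 0}"
  using finite_vimageI[OF _ inj_emb, of "{k. c k \<noteq> 0}"] by (simp add: vimage_def)

lemma pow_zero_op: assumes "n \<noteq> 0" shows "((\<lambda>_. 0::'a::zero) ^^ n) (x::'a) = 0"
proof -
  obtain m where "n = Suc m" using assms by (cases n) auto
  thus ?thesis by simp
qed

lemma pow_op_zero: "bounded_clinear S \<Longrightarrow> (S ^^ n) 0 = 0"
  by (induction n) (auto simp: bcl_zero)

lemma opoly_emb:
  assumes "bounded_clinear S" "bounded_clinear P" "finite {k. c k \<noteq> 0}"
  shows "opoly3 c S P (\<lambda>_. 0) = opoly2 (c \<circ> emb) S P"
proof
  fix x
  show "opoly3 c S P (\<lambda>_. 0) x = opoly2 (c \<circ> emb) S P x"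
    unfolding opoly3_def opoly2_def
    by (subst sum_emb[OF assms(3)]) (auto simp: pow_zero_op pow_op_zero assms cscale_zero_right emb_def)
qed

lemma poly_emb:
  assumes "finite {k. c k \<noteq> 0}"
  shows "poly3 c (a, b, 0) = poly2 (c \<circ> emb) (a, b)"
  unfolding poly3_def poly2_def
  by (subst sum_emb[OF assms]) (auto simp: emb_def)

definition e3 :: "complex \<times> complex \<times> complex \<Rightarrow> complex \<times> complex \<times> complex" where
  "e3 z = (case z of (z1, z2, z3) \<Rightarrow> (z1 + z2 + z3, z1 * z2 + z2 * z3 + z3 * z1, z1 * z2 * z3))"

lemma Gamma3_eq: "Gamma3 = e3 ` (cball 0 1 \<times> cball 0 1 \<times> cball 0 1)"
proof (rule set_eqI, rule iffI)
  fix x assume "x \<in> Gamma3"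
  then obtain z1 z2 z3 where x: "x = (z1 + z2 + z3, z1 * z2 + z2 * z3 + z3 * z1, z1 * z2 * z3)"
    and c: "cmod z1 \<le> 1" "cmod z2 \<le> 1" "cmod z3 \<le> 1"
    unfolding Gamma3_def by blast
  have "x = e3 (z1, z2, z3)" by (simp add: e3_def x)
  moreover have "(z1, z2, z3) \<in> cball 0 1 \<times> cball 0 1 \<times> cball 0 1"
    using c by (simp add: mem_Times_iff)
  ultimately show "x \<in> e3 ` (cball 0 1 \<times> cball 0 1 \<times> cball 0 1)"
    by (rule image_eqI)
next
  fix x assume "x \<in> e3 ` (cball 0 1 \<times> cball 0 1 \<times> cball 0 1)"
  then obtain w where w: "w \<in> cball 0 1 \<times> cball 0 1 \<times> cball 0 1" and xw: "x = e3 w"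
    by (rule imageE)
  obtain z1 z2 z3 where wz: "w = (z1, z2, z3)" by (cases w) auto
  have c: "cmod z1 \<le> 1" "cmod z2 \<le> 1" "cmod z3 \<le> 1" using w wz by (simp_all add: mem_Times_iff)
  have "x = (z1 + z2 + z3, z1 * z2 + z2 * z3 + z3 * z1, z1 * z2 * z3)"
    by (simp add: e3_def xw wz)
  with c show "x \<in> Gamma3" unfolding Gamma3_def mem_Collect_eq
    by (intro exI[of _ z1] exI[of _ z2] exI[of _ z3]) simp
qed

lemma cont_poly3: "continuous_on K (\<lambda>z. poly3 c (e3 z))"
  unfolding poly3_def e3_def case_prod_beta by (intro continuous_intros)

lemma bdd_Gamma3:
  assumes "\<forall>z\<in>Gamma3. poly3 q z \<noteq> 0"
  shows "bdd_above ((\<lambda>z. cmod (poly3 p z / poly3 q z)) ` Gamma3)"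
proof -
  let ?K = "cball (0::complex) 1 \<times> cball (0::complex) 1 \<times> cball (0::complex) 1"
  have nz: "\<forall>z\<in>?K. poly3 q (e3 z) \<noteq> 0"
  proof
    fix z assume "z \<in> ?K" hence "e3 z \<in> Gamma3" unfolding Gamma3_eq by (rule imageI)
    thus "poly3 q (e3 z) \<noteq> 0" using assms by blast
  qed
  have "continuous_on ?K (\<lambda>z. poly3 p (e3 z) / poly3 q (e3 z))"
    by (rule continuous_on_divide[OF cont_poly3 cont_poly3]) (use nz in blast)
  hence "continuous_on ?K (\<lambda>z. cmod (poly3 p (e3 z) / poly3 q (e3 z)))"
    by (rule continuous_on_norm)
  moreover have "compact ?K" by (intro compact_Times compact_cball)
  ultimately have "compact ((\<lambda>z. cmod (poly3 p (e3 z) / poly3 q (e3 z))) ` ?K)"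
    by (rule compact_continuous_image)
  hence "bounded ((\<lambda>z. cmod (poly3 p (e3 z) / poly3 q (e3 z))) ` ?K)"
    by (rule compact_imp_bounded)
  hence "bdd_above ((\<lambda>z. cmod (poly3 p (e3 z) / poly3 q (e3 z))) ` ?K)"
    by (rule bounded_imp_bdd_above)
  moreover have "(\<lambda>z. cmod (poly3 p z / poly3 q z)) ` Gamma3 =
      (\<lambda>z. cmod (poly3 p (e3 z) / poly3 q (e3 z))) ` ?K"
    unfolding Gamma3_eq image_image ..
  ultimately show ?thesis by simp
qed

lemma G2_in_G3: "(a, b) \<in> Gamma2 \<Longrightarrow> (a, b, 0) \<in> Gamma3"
proof -
  assume "(a, b) \<in> Gamma2"
  then obtain z1 z2 where h: "a = z1 + z2" "b = z1 * z2" "cmod z1 \<le> 1" "cmod z2 \<le> 1"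
    unfolding Gamma2_def by auto
  hence "(a, b, 0) = (z1 + z2 + 0, z1 * z2 + z2 * 0 + 0 * z1, z1 * z2 * 0)
      \<and> cmod z1 \<le> 1 \<and> cmod z2 \<le> 1 \<and> cmod (0::complex) \<le> 1" by simp
  thus ?thesis unfolding Gamma3_def mem_Collect_eq
    by (intro exI[of _ z1] exI[of _ z2] exI[of _ 0]) simp
qed

theorem lemma10p3:
  fixes S P :: "'a::chilbert_space \<Rightarrow> 'a"
  assumes "gamma_contraction S P"
  shows "gamma3_contraction S P (\<lambda>_. 0)"
proof -
  from assms have bS: "bounded_clinear S" and bP: "bounded_clinear P" and comm: "S \<circ> P = P \<circ> S"
    and sp: "taylor_spectrum2 S P \<subseteq> Gamma2"
    and nm: "\<And>p q R. finite {k. p k \<noteq> 0} \<Longrightarrow> finite {k. q k \<noteq> 0} \<Longrightarrow>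
            (\<forall>z\<in>Gamma2. poly2 q z \<noteq> 0) \<Longrightarrow>
        R \<circ> opoly2 q S P = id \<Longrightarrow> opoly2 q S P \<circ> R = id \<Longrightarrow>
           onorm (opoly2 p S P \<circ> R) \<le> (SUP z\<in>Gamma2. cmod (poly2 p z / poly2 q z))"
    unfolding gamma_contraction_def by blast+
  have b0: "bounded_clinear (\<lambda>_::'a. 0::'a)"
    unfolding bounded_clinear_def by (simp add: cscale_zero_right bounded_linear_zero)
  have c1: "S \<circ> (\<lambda>_. 0) = (\<lambda>_. 0) \<circ> S" and c2: "P \<circ> (\<lambda>_. 0) = (\<lambda>_. 0) \<circ> P"
    using bS bP by (auto simp: bcl_zero)
  have spec: "taylor_spectrum3 S P (\<lambda>_. 0) \<subseteq> Gamma3"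
  proof
    fix l assume l: "l \<in> taylor_spectrum3 S P (\<lambda>_. 0)"
    obtain l1 l2 l3 where leq: "l = (l1, l2, l3)" by (cases l) auto
    have ne: "\<not> koszul_exact3 (shift_op S l1) (shift_op P l2) (shift_op (\<lambda>_. 0) l3)"
      using l leq unfolding taylor_spectrum3_def by auto
    show "l \<in> Gamma3"
    proof (cases "l3 = 0")
      case True
      have "shift_op (\<lambda>_::'a. 0::'a) 0 = (\<lambda>_. 0)"
        by (rule ext) (simp add: shift_op_def cscale_of_real[of 0, simplified])
      hence "\<not> koszul_exact2 (shift_op S l1) (shift_op P l2)"
        using ne True exact2_to_3[OF bS bP, of l1 l2] by auto
      hence "(l1, l2) \<in> Gamma2" using sp unfolding taylor_spectrum2_def by auto
      thus ?thesis using leq True G2_in_G3 by simp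
    next
      case False
      let ?D = "\<lambda>x::'a. cscale (- inverse l3) x"
      have "koszul_exact3 (shift_op S l1) (shift_op P l2) (shift_op (\<lambda>_. 0) l3)"
        unfolding koszul_exact3_def
      proof (rule exact3_inv[where D = ?D])
        show "shift_op S l1 0 = 0" "shift_op P l2 0 = 0" using bS bP by (simp_all add: shift_zero)
        show "\<And>x y. ?D (x - y) = ?D x - ?D y" by (rule cscale_diff_right)
        have m1: "l3 * - inverse l3 = -1" "- inverse l3 * l3 = -1" using False by auto
        show "\<And>x. shift_op (\<lambda>_. 0) l3 (?D x) = x"
          by (simp only: shift_op_def diff_0 cscale_minus_right cscale_cscale m1 cscale_mone minus_minus)
        show "\<And>x. ?D (shift_op (\<lambda>_. 0) l3 x) = x"
          by (simp only: shift_op_def diff_0 cscale_minus_right cscale_cscale m1 cscale_mone minus_minus)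
        show "\<And>x. shift_op S l1 (?D x) = ?D (shift_op S l1 x)" using bS by (rule shift_comm)
        show "\<And>x. shift_op P l2 (?D x) = ?D (shift_op P l2 x)" using bP by (rule shift_comm)
      qed
      thus ?thesis using ne by contradiction
    qed
  qed
  have norm3: "\<forall>p q. finite {k. p k \<noteq> 0} \<and> finite {k. q k \<noteq> 0} \<and>
            (\<forall>z\<in>Gamma3. poly3 q z \<noteq> 0) \<longrightarrow>
        (\<forall>R. R \<circ> opoly3 q S P (\<lambda>_. 0) = id \<and> opoly3 q S P (\<lambda>_. 0) \<circ> R = id \<longrightarrow>
           onorm (opoly3 p S P (\<lambda>_. 0) \<circ> R) \<le> (SUP z\<in>Gamma3. cmod (poly3 p z / poly3 q z)))"
  proof (intro allI impI)
    fix p q :: "nat \<times> nat \<times> nat \<Rightarrow> complex" and R :: "'a \<Rightarrow> 'a"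
    assume h: "finite {k. p k \<noteq> 0} \<and> finite {k. q k \<noteq> 0} \<and> (\<forall>z\<in>Gamma3. poly3 q z \<noteq> 0)"
      and hR: "R \<circ> opoly3 q S P (\<lambda>_. 0) = id \<and> opoly3 q S P (\<lambda>_. 0) \<circ> R = id"
    have fp: "finite {k. p k \<noteq> 0}" and fq: "finite {k. q k \<noteq> 0}"
      and nz: "\<forall>z\<in>Gamma3. poly3 q z \<noteq> 0" using h by auto
    have nz2: "\<forall>z\<in>Gamma2. poly2 (q \<circ> emb) z \<noteq> 0"
    proof
      fix z assume z: "z \<in> Gamma2"
      obtain a b where ab: "z = (a, b)" by (cases z)
      have "poly3 q (a, b, 0) \<noteq> 0" using nz G2_in_G3 z ab by blast
      thus "poly2 (q \<circ> emb) z \<noteq> 0" using poly_emb[OF fq] ab by simp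
    qed
    have h1: "R \<circ> opoly2 (q \<circ> emb) S P = id" and h2: "opoly2 (q \<circ> emb) S P \<circ> R = id"
      using hR opoly_emb[OF bS bP fq] by simp_all
    have "onorm (opoly2 (p \<circ> emb) S P \<circ> R) \<le>
        (SUP z\<in>Gamma2. cmod (poly2 (p \<circ> emb) z / poly2 (q \<circ> emb) z))"
      by (rule nm[OF fin_emb[OF fp] fin_emb[OF fq] nz2 h1 h2])
    also have "\<dots> \<le> (SUP z\<in>Gamma3. cmod (poly3 p z / poly3 q z))"
    proof (rule cSup_subset_mono)
      show "(\<lambda>z. cmod (poly2 (p \<circ> emb) z / poly2 (q \<circ> emb) z)) ` Gamma2 \<noteq> {}"
      proof -
        have "(0, 0) \<in> Gamma2" unfolding Gamma2_def mem_Collect_eq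
          by (intro exI[of _ 0]) simp
        thus ?thesis by blast
      qed
      show "bdd_above ((\<lambda>z. cmod (poly3 p z / poly3 q z)) ` Gamma3)"
        using bdd_Gamma3[OF nz] .
      show "(\<lambda>z. cmod (poly2 (p \<circ> emb) z / poly2 (q \<circ> emb) z)) ` Gamma2
          \<subseteq> (\<lambda>z. cmod (poly3 p z / poly3 q z)) ` Gamma3"
      proof
        fix v assume "v \<in> (\<lambda>z. cmod (poly2 (p \<circ> emb) z / poly2 (q \<circ> emb) z)) ` Gamma2"
        then obtain a b where ab: "(a, b) \<in> Gamma2"
          and v: "v = cmod (poly2 (p \<circ> emb) (a, b) / poly2 (q \<circ> emb) (a, b))" by auto
        have "v = cmod (poly3 p (a, b, 0) / poly3 q (a, b, 0))"
          using v poly_emb[OF fp] poly_emb[OF fq] by simp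
        thus "v \<in> (\<lambda>z. cmod (poly3 p z / poly3 q z)) ` Gamma3"
          using G2_in_G3[OF ab] by blast
      qed
    qed
    finally show "onorm (opoly3 p S P (\<lambda>_. 0) \<circ> R) \<le> (SUP z\<in>Gamma3. cmod (poly3 p z / poly3 q z))"
      using opoly_emb[OF bS bP fp] by simp
  qed
  show ?thesis unfolding gamma3_contraction_def
    by (intro conjI bS bP b0 comm c1 c2 spec norm3)
qed

end
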